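(* Let $\Omega\subset\mathbb{R}^n$ be a bounded smooth domain and $u\in C^\infty(\bar\Omega)$ with $u>0$, $|\nabla u|<1$, such that $p(x)=\frac12(|x|^2-u(x)^2)$ is strictly convex, and let $y=\nabla p(x)=x-u(x)\nabla u(x)$, $x\in\Omega$, be one-to-one on $\Omega$, with image $\Omega^*=y(\Omega)$. Define $v$ on $\Omega^*$ by $v(y)=u(x)\sqrt{1-|\nabla u(x)|^2}$ and the Legendre transform $q(y)=x\cdot y-p(x)$. Then $q(y)=\frac12(|y|^2+v(y)^2)$. Moreover $\sqrt{1+|\nabla v(y)|^2}=(1-|\nabla u(x)|^2)^{-1/2}$ and $u(x)=v(y)\sqrt{1+|\nabla v(y)|^2}$. Also $x=\nabla q(y)$, $(q_{ij}(y))=(p_{ij}(x))^{-1}$, and the inverse $L^*$ of the map $L(x,u(x))=(x-u\nabla u,\ u\sqrt{1-|\nabla u|^2})$ is given by $L^*(y,v(y))=(x,u(x))$. *)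

theory Defs
  imports "HOL-Analysis.Analysis"
begin

definition partial :: "'n \<Rightarrow> (real^'n \<Rightarrow> real) \<Rightarrow> real^'n \<Rightarrow> real" where
  "partial i f x = (SOME d. ((\<lambda>t. f (x + t *\<^sub>R axis i 1)) has_real_derivative d) (at 0))"

definition grad :: "(real^'n \<Rightarrow> real) \<Rightarrow> real^'n \<Rightarrow> real^'n" where
  "grad f x = (\<chi> i. partial i f x)"

definition hess :: "(real^'n \<Rightarrow> real) \<Rightarrow> real^'n \<Rightarrow> real^'n^'n" where
  "hess f x = (\<chi> i j. partial j (partial i f) x)"

fun Ck_on :: "nat \<Rightarrow> (real^'n) set \<Rightarrow> (real^'n \<Rightarrow> real) \<Rightarrow> bool" where
  "Ck_on 0 U f = continuous_on U f"
| "Ck_on (Suc k) U f = (continuous_on U f \<and> (\<forall>x\<in>U. f differentiable (at x))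
       \<and> (\<forall>i. Ck_on k U (partial i f)))"

definition smooth_on :: "(real^'n) set \<Rightarrow> (real^'n \<Rightarrow> real) \<Rightarrow> bool" where
  "smooth_on U f = (open U \<and> (\<forall>k. Ck_on k U f))"

definition bounded_smooth_domain :: "(real^'n) set \<Rightarrow> bool" where
  "bounded_smooth_domain \<Omega> = (open \<Omega> \<and> connected \<Omega> \<and> bounded \<Omega> \<and> \<Omega> \<noteq> {} \<and>
     (\<exists>\<rho>. smooth_on UNIV \<rho> \<and> \<Omega> = {x. \<rho> x < 0} \<and> (\<forall>x\<in>frontier \<Omega>. grad \<rho> x \<noteq> 0)))"

definition Lmap :: "(real^'n \<Rightarrow> real) \<Rightarrow> real^'n \<Rightarrow> (real^'n) \<times> real" where
  "Lmap u x = (x - u x *\<^sub>R grad u x, u x * sqrt (1 - (norm (grad u x))\<^sup>2))"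

definition Lstar :: "(real^'n \<Rightarrow> real) \<Rightarrow> real^'n \<Rightarrow> (real^'n) \<times> real" where
  "Lstar v y = (y + v y *\<^sub>R grad v y, v y * sqrt (1 + (norm (grad v y))\<^sup>2))"

end

theory Submission imports Defs begin

lemma partial_eq:
  assumes "(f has_derivative f') (at x)"
  shows "partial i f x = f' (axis i 1)"
proof -
  have bl: "bounded_linear f'" using assms has_derivative_bounded_linear by blast
  have h1: "((\<lambda>t::real. x + t *\<^sub>R axis i 1) has_derivative (\<lambda>t. t *\<^sub>R axis i 1)) (at 0)"
    by (auto intro!: derivative_eq_intros)
  have "((\<lambda>t. f (x + t *\<^sub>R axis i 1)) has_derivative (\<lambda>t. f' (t *\<^sub>R axis i 1))) (at 0)"
    using has_derivative_compose[OF h1] assms by simp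
  then have d: "((\<lambda>t. f (x + t *\<^sub>R axis i 1)) has_real_derivative f' (axis i 1)) (at 0)"
    by (rule has_derivative_imp_has_field_derivative) (simp add: linear_cmul[OF has_derivative_linear[OF assms]])
  show ?thesis unfolding partial_def
    by (rule some_equality) (use d DERIV_unique in blast)+
qed

lemma linear_real_inner:
  fixes f' :: "real^'n \<Rightarrow> real"
  assumes "linear f'"
  shows "f' h = (\<chi> i. f' (axis i 1)) \<bullet> h"
proof -
  have "f' h = f' (\<Sum>i\<in>UNIV. h$i *\<^sub>R axis i 1)"
    using basis_expansion[of h] by (simp add: scalar_mult_eq_scaleR)
  also have "\<dots> = (\<Sum>i\<in>UNIV. h$i * f' (axis i 1))"
    using assms by (simp add: linear_sum linear_cmul)
  finally show ?thesis by (simp add: inner_vec_def mult.commute)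
qed

lemma grad_eq:
  assumes "(f has_derivative (\<lambda>h. a \<bullet> h)) (at x)"
  shows "grad f x = a"
proof -
  have "\<And>i. partial i f x = a $ i"
    using partial_eq[OF assms] by (simp add: inner_axis)
  then show ?thesis unfolding grad_def by (simp add: vec_eq_iff)
qed

lemma deriv_grad:
  fixes f :: "real^'n \<Rightarrow> real"
  assumes "f differentiable (at x)"
  shows "(f has_derivative (\<lambda>h. grad f x \<bullet> h)) (at x)"
proof -
  obtain D where D: "(f has_derivative D) (at x)" using assms differentiable_def by blast
  have lin: "linear D" using D has_derivative_linear by blast
  have g: "grad f x = (\<chi> i. D (axis i 1))" unfolding grad_def
    by (rule arg_cong[where f=vec_lambda], rule ext, rule partial_eq[OF D])
  have "D = (\<lambda>h. grad f x \<bullet> h)" unfolding g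
    by (rule ext, rule linear_real_inner[OF lin])
  then show ?thesis using D by simp
qed

lemma vec_deriv:
  fixes F :: "real^'n \<Rightarrow> real^'m"
  assumes "\<And>i. ((\<lambda>x. F x $ i) has_derivative (\<lambda>h. F' h $ i)) (at a)"
  shows "(F has_derivative F') (at a)"
  unfolding has_derivative_componentwise_within[of F F' a UNIV]
  using assms by (auto simp: Basis_vec_def inner_axis)

lemma minv:
  fixes A B :: "real^'n^'n"
  assumes "A ** B = mat 1" "B ** A = mat 1"
  shows "matrix_inv A = B"
proof -
  let ?C = "matrix_inv A"
  have "A ** ?C = mat 1 \<and> ?C ** A = mat 1"
    unfolding matrix_inv_def by (rule someI[of _ B]) (use assms in blast)
  then have "?C = ?C ** (A ** B)" using assms by (simp add: matrix_mul_rid)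
  also have "\<dots> = B" using \<open>A ** ?C = mat 1 \<and> ?C ** A = mat 1\<close>
    by (simp add: matrix_mul_assoc matrix_mul_lid)
  finally show ?thesis .
qed

lemma vec_deriv_comp:
  fixes F :: "real^'n \<Rightarrow> real^'m"
  assumes "(F has_derivative F') (at a)"
  shows "((\<lambda>x. F x $ i) has_derivative (\<lambda>h. F' h $ i)) (at a)"
proof -
  have "axis i 1 \<in> (Basis :: (real^'m) set)" by (auto simp: Basis_vec_def)
  then have "((\<lambda>x. F x \<bullet> axis i 1) has_derivative (\<lambda>x. F' x \<bullet> axis i 1)) (at a)"
    using assms unfolding has_derivative_componentwise_within[of F F' a UNIV] by blast
  then show ?thesis by (simp add: inner_axis)
qed

lemma partial2_eq:
  assumes "open S" "x \<in> S" "\<And>z. z \<in> S \<Longrightarrow> partial i f z = F z $ i"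
    "(F has_derivative F') (at x)"
  shows "partial j (partial i f) x = F' (axis j 1) $ i"
    and "partial i f differentiable (at x)"
proof -
  have "((partial i f) has_derivative (\<lambda>h. F' h $ i)) (at x)"
    by (rule has_derivative_transform_within_open[OF vec_deriv_comp[OF assms(4)] assms(1,2)])
       (use assms(3) in auto)
  then show "partial j (partial i f) x = F' (axis j 1) $ i" "partial i f differentiable (at x)"
    using partial_eq differentiableI by blast+
qed

theorem lemma2p1:
  fixes \<Omega> :: "(real^'n) set" and u v q :: "real^'n \<Rightarrow> real"
    and p :: "real^'n \<Rightarrow> real" and Y :: "real^'n \<Rightarrow> real^'n"
  defines "p \<equiv> \<lambda>x. ((norm x)\<^sup>2 - (u x)\<^sup>2) / 2"
    and "Y \<equiv> \<lambda>x. x - u x *\<^sub>R grad u x"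
  assumes dom: "bounded_smooth_domain \<Omega>"
    and u_smooth: "\<exists>U. closure \<Omega> \<subseteq> U \<and> smooth_on U u"
    and u_pos: "\<forall>x\<in>closure \<Omega>. u x > 0"
    and grad_u: "\<forall>x\<in>closure \<Omega>. norm (grad u x) < 1"
    and p_convex: "\<forall>x\<in>\<Omega>. \<forall>h. h \<noteq> 0 \<longrightarrow> h \<bullet> (hess p x *v h) > 0"
    and Y_inj: "inj_on Y \<Omega>"
    and v_def: "\<forall>x\<in>\<Omega>. v (Y x) = u x * sqrt (1 - (norm (grad u x))\<^sup>2)"
    and q_def: "\<forall>x\<in>\<Omega>. q (Y x) = x \<bullet> Y x - p x"
  shows "\<forall>x\<in>\<Omega>.
     q (Y x) = ((norm (Y x))\<^sup>2 + (v (Y x))\<^sup>2) / 2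
   \<and> v differentiable (at (Y x))
   \<and> sqrt (1 + (norm (grad v (Y x)))\<^sup>2) = 1 / sqrt (1 - (norm (grad u x))\<^sup>2)
   \<and> u x = v (Y x) * sqrt (1 + (norm (grad v (Y x)))\<^sup>2)
   \<and> q differentiable (at (Y x)) \<and> grad q (Y x) = x
   \<and> (\<forall>i. partial i q differentiable (at (Y x)))
   \<and> hess q (Y x) = matrix_inv (hess p x)
   \<and> Lmap u x = (Y x, v (Y x))
   \<and> Lstar v (Y x) = (x, u x)"
proof -
  obtain U where U: "closure \<Omega> \<subseteq> U" "open U" "\<And>k. Ck_on k U u"
    using u_smooth unfolding smooth_on_def by blast
  have Om: "open \<Omega>" using dom unfolding bounded_smooth_domain_def by blast
  have OmU: "\<Omega> \<subseteq> U" using U(1) closure_subset by blast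
  have C2: "Ck_on (Suc (Suc 0)) U u" by (rule U(3))
  have udiff: "\<And>z. z \<in> U \<Longrightarrow> u differentiable (at z)" using C2 by simp
  have pudiff: "\<And>z i. z \<in> U \<Longrightarrow> partial i u differentiable (at z)" using C2 by simp
  have Du: "\<And>z. z \<in> U \<Longrightarrow> (u has_derivative (\<lambda>h. grad u z \<bullet> h)) (at z)"
    using udiff deriv_grad by blast
  have gradu_diff: "grad u differentiable (at z)" if z: "z \<in> U" for z
  proof -
    have "((\<lambda>w. grad u w $ i) has_derivative (\<lambda>h. (\<chi> i. grad (partial i u) z \<bullet> h) $ i)) (at z)" for i
      using deriv_grad[OF pudiff[OF z, of i]] by (simp add: grad_def)
    then have "(grad u has_derivative (\<lambda>h. (\<chi> i. grad (partial i u) z \<bullet> h))) (at z)"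
      by (rule vec_deriv)
    then show ?thesis by (rule differentiableI)
  qed
  have Ydiff: "Y differentiable (at z)" if "z \<in> U" for z
    unfolding Y_def using udiff[OF that] gradu_diff[OF that]
    by (intro differentiable_diff differentiable_scaleR differentiable_ident) auto
  define DY where "DY z = frechet_derivative Y (at z)" for z
  have DY: "\<And>z. z \<in> U \<Longrightarrow> (Y has_derivative DY z) (at z)"
    unfolding DY_def using Ydiff frechet_derivative_works by blast
  have linDY: "\<And>z. z \<in> U \<Longrightarrow> linear (DY z)" using DY has_derivative_linear by blast
  have Dp: "(p has_derivative (\<lambda>h. Y z \<bullet> h)) (at z)" if z: "z \<in> U" for z
  proof -
    have p_eq: "p = (\<lambda>x. (x \<bullet> x - u x * u x) * (1/2))"
      unfolding p_def by (simp add: power2_norm_eq_inner[symmetric] power2_eq_square)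
    have d1: "((\<lambda>x. x \<bullet> x) has_derivative (\<lambda>h. z \<bullet> h + h \<bullet> z)) (at z)"
      using has_derivative_inner[OF has_derivative_ident has_derivative_ident, of z UNIV] by simp
    have d2: "((\<lambda>x. u x * u x) has_derivative
        (\<lambda>h. u z * (grad u z \<bullet> h) + (grad u z \<bullet> h) * u z)) (at z)"
      using has_derivative_mult[OF Du[OF z] Du[OF z]] by simp
    have d3: "((\<lambda>x. (x \<bullet> x - u x * u x) * (1/2)) has_derivative
        (\<lambda>h. ((z \<bullet> h + h \<bullet> z) - (u z * (grad u z \<bullet> h) + (grad u z \<bullet> h) * u z)) * (1/2))) (at z)"
      by (rule has_derivative_mult_left[OF has_derivative_diff[OF d1 d2]])
    moreover have "(\<lambda>h. ((z \<bullet> h + h \<bullet> z) - (u z * (grad u z \<bullet> h) + (grad u z \<bullet> h) * u z)) * (1/2))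
        = (\<lambda>h. Y z \<bullet> h)"
      unfolding Y_def by (rule ext) (simp add: inner_diff_left inner_commute algebra_simps)
    ultimately show ?thesis unfolding p_eq by simp
  qed
  have pp: "\<And>z i. z \<in> U \<Longrightarrow> partial i p z = Y z $ i"
    using grad_eq[OF Dp] by (metis grad_def vec_lambda_beta)
  have hessp: "hess p x = matrix (DY x)" if x: "x \<in> U" for x
    using partial2_eq(1)[OF U(2) x pp DY[OF x]] by (simp add: hess_def matrix_def)
  have injDY: "inj (DY x)" if x: "x \<in> \<Omega>" for x
  proof -
    have xU: "x \<in> U" using x OmU by blast
    have "h = 0" if h: "DY x h = 0" for h
    proof (rule ccontr)
      assume "h \<noteq> 0"
      then have "h \<bullet> (hess p x *v h) > 0" using p_convex x by blast
      moreover have "hess p x *v h = DY x h"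
        unfolding hessp[OF xU] using linDY[OF xU] by (simp add: matrix_works linear_linear scalar_mult_eq_scaleR)
      ultimately show False using h by simp
    qed
    then show ?thesis using linDY[OF xU] linear_inj_iff_eq_0 by blast
  qed
  have invDY: "\<exists>G. linear G \<and> DY x \<circ> G = id \<and> G \<circ> DY x = id" if x: "x \<in> \<Omega>" for x
  proof -
    have xU: "x \<in> U" using x OmU by blast
    obtain G where G: "linear G" "G \<circ> DY x = id"
      using linear_injective_left_inverse[OF linDY[OF xU] injDY[OF x]] by blast
    then have "DY x \<circ> G = id" using linear_inverse_left linDY[OF xU] by blast
    then show ?thesis using G by blast
  qed
  have contY: "continuous_on \<Omega> Y"
    using Ydiff OmU differentiable_imp_continuous_within
    by (metis continuous_at_imp_continuous_on subsetD)
  define V where "V = Y ` \<Omega>"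
  have Vopen: "open V" unfolding V_def by (rule invariance_of_domain[OF contY Om Y_inj])
  define g where "g = inv_into \<Omega> Y"
  have gY: "\<And>z. z \<in> \<Omega> \<Longrightarrow> g (Y z) = z" unfolding g_def using Y_inj by simp
  have gder: "\<exists>G. linear G \<and> DY x \<circ> G = id \<and> (g has_derivative G) (at (Y x))" if x: "x \<in> \<Omega>" for x
  proof -
    have xU: "x \<in> U" using x OmU by blast
    obtain G where G: "linear G" "DY x \<circ> G = id" using invDY[OF x] by blast
    have "(g has_derivative G) (at (Y x))"
      by (rule has_derivative_inverse_strong[OF Om x contY gY DY[OF xU] G(2)])
    then show ?thesis using G by blast
  qed
  have claim1: "q (Y x) = ((norm (Y x))\<^sup>2 + (v (Y x))\<^sup>2) / 2" if x: "x \<in> \<Omega>" for x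
  proof -
    have xc: "x \<in> closure \<Omega>" using x closure_subset by blast
    have "norm (grad u x) < 1" using grad_u xc by blast
    then have "0 \<le> 1 - (norm (grad u x))\<^sup>2"
      by (simp add: abs_square_le_1 less_imp_le)
    then have sq: "(sqrt (1 - (norm (grad u x))\<^sup>2))\<^sup>2 = 1 - (norm (grad u x))\<^sup>2" by simp
    have "(v (Y x))\<^sup>2 = (u x)\<^sup>2 * (1 - (norm (grad u x))\<^sup>2)"
      using v_def x sq by (simp add: power_mult_distrib)
    moreover have "q (Y x) = x \<bullet> Y x - p x" using q_def x by blast
    moreover have "(norm (Y x))\<^sup>2 = x \<bullet> x - 2 * u x * (x \<bullet> grad u x) + (u x)\<^sup>2 * (grad u x \<bullet> grad u x)"
      unfolding Y_def power2_norm_eq_inner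
      by (simp add: inner_diff_left inner_diff_right inner_commute algebra_simps power2_eq_square)
    moreover have "x \<bullet> Y x = x \<bullet> x - u x * (x \<bullet> grad u x)"
      unfolding Y_def by (simp add: inner_diff_right)
    moreover have "p x = (x \<bullet> x - (u x)\<^sup>2) / 2"
      unfolding p_def by (simp add: power2_norm_eq_inner)
    moreover have "(norm (grad u x))\<^sup>2 = grad u x \<bullet> grad u x" by (simp add: power2_norm_eq_inner)
    ultimately show ?thesis by (simp add: field_simps)
  qed
  have vpos: "v (Y x) > 0" and s_pos: "sqrt (1 - (norm (grad u x))\<^sup>2) > 0" if x: "x \<in> \<Omega>" for x
  proof -
    have xc: "x \<in> closure \<Omega>" using x closure_subset by blast
    have "norm (grad u x) < 1" using grad_u xc by blast
    then have "(norm (grad u x))\<^sup>2 < 1"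
      by (simp add: abs_square_less_1)
    then show s: "sqrt (1 - (norm (grad u x))\<^sup>2) > 0" by simp
    show "v (Y x) > 0" using v_def x u_pos xc s by simp
  qed
  have qeq: "\<And>z. z \<in> V \<Longrightarrow> q z = g z \<bullet> z - p (g z)"
    unfolding V_def using q_def gY by auto
  have qder: "(q has_derivative (\<lambda>h. x \<bullet> h)) (at (Y x))"
    and gG: "\<exists>G. linear G \<and> DY x \<circ> G = id \<and> (g has_derivative G) (at (Y x))" if x: "x \<in> \<Omega>" for x
  proof -
    have xU: "x \<in> U" using x OmU by blast
    obtain G where G: "linear G" "DY x \<circ> G = id" "(g has_derivative G) (at (Y x))"
      using gder[OF x] by blast
    then show "\<exists>G. linear G \<and> DY x \<circ> G = id \<and> (g has_derivative G) (at (Y x))" by blast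
    have d1: "((\<lambda>z. g z \<bullet> z) has_derivative (\<lambda>h. g (Y x) \<bullet> h + G h \<bullet> Y x)) (at (Y x))"
      using has_derivative_inner[OF G(3) has_derivative_ident] by simp
    have d2: "((\<lambda>z. p (g z)) has_derivative (\<lambda>h. Y x \<bullet> G h)) (at (Y x))"
      using has_derivative_compose[OF G(3), of p] Dp[OF xU] gY[OF x] by simp
    have "((\<lambda>z. g z \<bullet> z - p (g z)) has_derivative (\<lambda>h. x \<bullet> h)) (at (Y x))"
      using has_derivative_diff[OF d1 d2] gY[OF x] by (simp add: inner_commute)
    then show "(q has_derivative (\<lambda>h. x \<bullet> h)) (at (Y x))"
      by (rule has_derivative_transform_within_open[OF _ Vopen])
         (use x qeq in \<open>auto simp: V_def\<close>)
  qed
  have gradq: "grad q (Y x) = x" if "x \<in> \<Omega>" for x using grad_eq[OF qder[OF that]] .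
  have pq: "\<And>z i. z \<in> V \<Longrightarrow> partial i q z = g z $ i"
    unfolding V_def using gradq gY by (auto simp: grad_def vec_eq_iff)
  have veq: "\<And>z. z \<in> V \<Longrightarrow> v z = sqrt (2 * q z - z \<bullet> z)"
  proof -
    fix z assume "z \<in> V"
    then obtain w where w: "w \<in> \<Omega>" "z = Y w" unfolding V_def by blast
    have "2 * q z - z \<bullet> z = (v z)\<^sup>2"
      using claim1[OF w(1)] w(2) by (simp add: power2_norm_eq_inner)
    then show "v z = sqrt (2 * q z - z \<bullet> z)" using vpos[OF w(1)] w(2) by simp
  qed
  have vder: "(v has_derivative (\<lambda>h. (inverse (v (Y x)) *\<^sub>R (x - Y x)) \<bullet> h)) (at (Y x))"
    if x: "x \<in> \<Omega>" for x
  proof -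
    let ?y = "Y x"
    have yV: "?y \<in> V" unfolding V_def using x by blast
    have dw: "((\<lambda>z. 2 * q z - z \<bullet> z) has_derivative (\<lambda>h. 2 * (x \<bullet> h) - (?y \<bullet> h + h \<bullet> ?y))) (at ?y)"
      using has_derivative_diff[OF has_derivative_mult_right[OF qder[OF x], of 2]
          has_derivative_inner[OF has_derivative_ident has_derivative_ident, of ?y UNIV]] by simp
    have wpos: "2 * q ?y - ?y \<bullet> ?y > 0" and sw: "sqrt (2 * q ?y - ?y \<bullet> ?y) = v ?y"
      using veq[OF yV] vpos[OF x] by auto
    have "((\<lambda>z. sqrt (2 * q z - z \<bullet> z)) has_derivative
        (\<lambda>h. (2 * (x \<bullet> h) - (?y \<bullet> h + h \<bullet> ?y)) * (inverse (sqrt (2 * q ?y - ?y \<bullet> ?y)) / 2))) (at ?y)"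
      by (rule DERIV_compose_FDERIV[OF DERIV_real_sqrt[OF wpos] dw])
    moreover have "(\<lambda>h. (2 * (x \<bullet> h) - (?y \<bullet> h + h \<bullet> ?y)) * (inverse (sqrt (2 * q ?y - ?y \<bullet> ?y)) / 2))
       = (\<lambda>h. (inverse (v ?y) *\<^sub>R (x - ?y)) \<bullet> h)"
      unfolding sw by (rule ext) (simp add: inner_diff_left inner_commute algebra_simps)
    ultimately have "((\<lambda>z. sqrt (2 * q z - z \<bullet> z)) has_derivative (\<lambda>h. (inverse (v ?y) *\<^sub>R (x - ?y)) \<bullet> h)) (at ?y)"
      by simp
    then show ?thesis
      by (rule has_derivative_transform_within_open[OF _ Vopen yV]) (use veq in auto)
  qed
  show ?thesis
  proof
    fix x assume x: "x \<in> \<Omega>"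
    have xU: "x \<in> U" using x OmU by blast
    have xc: "x \<in> closure \<Omega>" using x closure_subset by blast
    have yV: "Y x \<in> V" unfolding V_def using x by blast
    obtain G where G: "linear G" "DY x \<circ> G = id" "(g has_derivative G) (at (Y x))"
      using gG[OF x] by blast
    have GD: "G \<circ> DY x = id" using G(1,2) linear_inverse_left linDY[OF xU] by blast
    have hq: "hess q (Y x) = matrix G"
      using partial2_eq(1)[OF Vopen yV pq G(3)] by (simp add: hess_def matrix_def)
    have pqd: "\<forall>i. partial i q differentiable (at (Y x))"
      using partial2_eq(2)[OF Vopen yV pq G(3)] by blast
    have mi: "matrix_inv (hess p x) = matrix G"
      unfolding hessp[OF xU]
    proof (rule minv)
      show "matrix (DY x) ** matrix G = mat 1"
        using matrix_compose[OF G(1) linDY[OF xU]] G(2) by (simp add: matrix_id_mat_1)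
      show "matrix G ** matrix (DY x) = mat 1"
        using matrix_compose[OF linDY[OF xU] G(1)] GD by (simp add: matrix_id_mat_1)
    qed
    define a where "a = grad u x"
    define s where "s = sqrt (1 - (norm a)\<^sup>2)"
    have spos: "s > 0" unfolding s_def a_def using s_pos[OF x] .
    have upos: "u x > 0" using u_pos xc by blast
    have vY: "v (Y x) = u x * s" unfolding s_def a_def using v_def x by blast
    have s2: "s\<^sup>2 = 1 - (norm a)\<^sup>2" unfolding s_def using spos s_def by simp
    have gv: "grad v (Y x) = (1 / s) *\<^sub>R a"
    proof -
      have "grad v (Y x) = inverse (v (Y x)) *\<^sub>R (x - Y x)" using grad_eq[OF vder[OF x]] .
      also have "x - Y x = u x *\<^sub>R a" unfolding Y_def a_def by simp
      finally show ?thesis using vY upos spos by (simp add: field_simps)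
    qed
    have n2: "1 + (norm (grad v (Y x)))\<^sup>2 = 1 / s\<^sup>2"
      unfolding gv using s2 spos by (simp add: field_simps power2_eq_square)
    have sq: "sqrt (1 + (norm (grad v (Y x)))\<^sup>2) = 1 / s"
      unfolding n2 using spos by (simp add: real_sqrt_divide)
    have lm: "Lmap u x = (Y x, v (Y x))"
      unfolding Lmap_def using vY Y_def s_def a_def by simp
    have ls: "Lstar v (Y x) = (x, u x)"
    proof -
      have e1: "v (Y x) *\<^sub>R grad v (Y x) = u x *\<^sub>R a" unfolding gv vY using spos by simp
      have e2: "v (Y x) * sqrt (1 + (norm (grad v (Y x)))\<^sup>2) = u x" unfolding sq vY using spos by simp
      show ?thesis unfolding Lstar_def e1 e2 by (simp add: Y_def a_def)
    qed
    show "q (Y x) = ((norm (Y x))\<^sup>2 + (v (Y x))\<^sup>2) / 2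
     \<and> v differentiable (at (Y x))
     \<and> sqrt (1 + (norm (grad v (Y x)))\<^sup>2) = 1 / sqrt (1 - (norm (grad u x))\<^sup>2)
     \<and> u x = v (Y x) * sqrt (1 + (norm (grad v (Y x)))\<^sup>2)
     \<and> q differentiable (at (Y x)) \<and> grad q (Y x) = x
     \<and> (\<forall>i. partial i q differentiable (at (Y x)))
     \<and> hess q (Y x) = matrix_inv (hess p x)
     \<and> Lmap u x = (Y x, v (Y x))
     \<and> Lstar v (Y x) = (x, u x)"
      using claim1[OF x] differentiableI[OF vder[OF x]] sq differentiableI[OF qder[OF x]]
        gradq[OF x] pqd hq mi lm ls vY spos
      by (simp add: s_def a_def)
  qed
qed

end
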